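(* Let $\alpha=\sigma_4\sigma_3\sigma_2\sigma_1\sigma_4\sigma_3\in B_5$, acting on $F_5$ by $(x_1)\alpha=x_1x_2x_1^{-1}$, $(x_2)\alpha=x_1x_3x_4x_3^{-1}x_1^{-1}$, $(x_3)\alpha=x_1x_3x_5x_3^{-1}x_1^{-1}$, $(x_4)\alpha=x_1x_3x_1^{-1}$, $(x_5)\alpha=x_1$. Then $\det(XI_5-B_\alpha(-1))=(X-1)(X^4+X^3-X^2+X+1)$, which has $-\lambda$ as a root, where $\lambda$ is the largest positive root of $X^4-X^3-X^2-X+1$; and $\mathrm{GR}(\alpha)=\lambda=R(B_\alpha(-1))$, so equality holds in $\mathrm{GR}(\alpha)\ge\sup_{|t_0|=1}R(B_\alpha(t_0))$.
   Context: Automorphisms of $F_5$ act on the right; $\sigma_i$: $(x_i)\sigma_i=x_ix_{i+1}x_i^{-1}$, $(x_{i+1})\sigma_i=x_i$, $(x_k)\sigma_i=x_k$ otherwise. $B_\alpha=(\varphi(\partial((x_i)\alpha)/\partial x_k))_{i,k}$ is the Burau matrix (Fox derivatives, $\varphi(x_i)=t$), $B_\alpha(-1)$ its evaluation at $t=-1$, $R$ the spectral radius, and $\mathrm{GR}(\alpha)=\sup_g\limsup_{p\to\infty}L((g)\alpha^p)^{1/p}$ with $L$ the reduced word length. *)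

theory Defs
  imports "Jordan_Normal_Form.Spectral_Radius" "HOL-Library.Extended_Real" "HOL-Library.Liminf_Limsup"
begin

(* Words in the free group F_5: a letter (j, False) is x_j, (j, True) is x_j^{-1}; generators j = 1..5 *)
type_synonym letter = "nat \<times> bool"

fun fred :: "letter list \<Rightarrow> letter list" where
  "fred [] = []"
| "fred (l # w) = (case fred w of [] \<Rightarrow> [l]
     | m # r \<Rightarrow> (if fst m = fst l \<and> snd m \<noteq> snd l then r else l # m # r))"

definition freduced :: "letter list \<Rightarrow> bool" where
  "freduced w = (\<forall>i. Suc i < length w \<longrightarrow>
      \<not> (fst (w ! i) = fst (w ! Suc i) \<and> snd (w ! i) \<noteq> snd (w ! Suc i)))"

(* elements of F_5 = reduced words in x_1..x_5; reduced word length L is list length *)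
definition F5 :: "letter list set" where
  "F5 = {w. freduced w \<and> (\<forall>l\<in>set w. fst l \<in> {1..5})}"

definition winv :: "letter list \<Rightarrow> letter list" where
  "winv w = rev (map (\<lambda>(j, b). (j, \<not> b)) w)"

(* an endomorphism is given by the images of the generators; (w)phi = act phi w (right action) *)
type_synonym fendo = "nat \<Rightarrow> letter list"

definition act :: "fendo \<Rightarrow> letter list \<Rightarrow> letter list" where
  "act \<phi> w = fred (concat (map (\<lambda>(j, b). if b then winv (\<phi> j) else \<phi> j) w))"

definition gen :: "nat \<Rightarrow> letter list" where
  "gen j = [(j, False)]"

definition idendo :: fendo where "idendo = gen"

definition rcomp :: "fendo \<Rightarrow> fendo \<Rightarrow> fendo" where
  "rcomp \<alpha> \<beta> = (\<lambda>j. act \<beta> (\<alpha> j))"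

definition sigma :: "nat \<Rightarrow> fendo" where
  "sigma i = (\<lambda>j. if j = i then [(i, False), (Suc i, False), (i, True)]
                 else if j = Suc i then [(i, False)] else [(j, False)])"

definition alpha :: fendo where
  "alpha = foldl rcomp idendo (map sigma [4, 3, 2, 1, 4, 3])"

(* phi(d w / d x_k) evaluated at t, via the Fox derivative rules
   d(x_j w) = delta_jk + x_j dw,  d(x_j^{-1} w) = - delta_jk x_j^{-1} + x_j^{-1} dw, phi(x_j) = t *)
fun foxev :: "complex \<Rightarrow> nat \<Rightarrow> letter list \<Rightarrow> complex" where
  "foxev t k [] = 0"
| "foxev t k ((j, False) # w) = (if j = k then 1 else 0) + t * foxev t k w"
| "foxev t k ((j, True) # w) = (if j = k then - inverse t else 0) + inverse t * foxev t k w"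

(* Burau matrix B_phi evaluated at t; row/column index i (0-based) corresponds to x_{i+1} *)
definition burau :: "fendo \<Rightarrow> complex \<Rightarrow> complex mat" where
  "burau \<phi> t = mat 5 5 (\<lambda>(i, k). foxev t (Suc k) (\<phi> (Suc i)))"

definition GR :: "fendo \<Rightarrow> ereal" where
  "GR \<phi> = (SUP g\<in>F5. limsup (\<lambda>p. ereal (real (length ((act \<phi> ^^ p) g)) powr (1 / real p))))"

definition lam :: real where
  "lam = Max {x. 0 < x \<and> x ^ 4 - x ^ 3 - x ^ 2 - x + 1 = 0}"

end

theory Submission
  imports Defs "HOL-Real_Asymp.Real_Asymp"
begin

definition linv :: "letter \<Rightarrow> letter" where "linv l = (fst l, \<not> snd l)"

definition cancels :: "letter \<Rightarrow> letter \<Rightarrow> bool" where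
  "cancels l m = (fst m = fst l \<and> snd m \<noteq> snd l)"

definition cr :: "letter \<Rightarrow> letter list \<Rightarrow> letter list" where
  "cr l w = (case w of [] \<Rightarrow> [l] | m # r \<Rightarrow> (if cancels l m then r else l # m # r))"

lemma cancels_iff: "cancels l m \<longleftrightarrow> m = linv l"
  by (cases l; cases m) (auto simp: cancels_def linv_def)

lemma linv_linv[simp]: "linv (linv l) = l" by (simp add: linv_def)
lemma fst_linv[simp]: "fst (linv l) = fst l" by (simp add: linv_def)

lemma fred_Cons: "fred (l # w) = cr l (fred w)"
  by (simp add: cr_def cancels_def split: list.split)

declare fred.simps(2)[simp del]
declare fred_Cons[simp]

lemma fred_foldr: "fred w = foldr cr w []"
  by (induction w) (simp_all add: fred_Cons)

lemma freduced_Nil[simp]: "freduced []" by (simp add: freduced_def)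
lemma freduced_single[simp]: "freduced [l]" by (simp add: freduced_def)
lemma freduced_Cons2: "freduced (l # m # r) \<longleftrightarrow> \<not> cancels l m \<and> freduced (m # r)"
  unfolding freduced_def cancels_def
  apply (rule iffI)
   apply (intro conjI)
    apply (metis length_Cons nth_Cons_0 nth_Cons_Suc zero_less_Suc Suc_less_eq)
   apply (metis length_Cons nth_Cons_Suc Suc_less_eq)
  apply clarify
  subgoal for i by (cases i) auto
  done

lemma freduced_ConsD: "freduced (l # w) \<Longrightarrow> freduced w"
  by (cases w) (auto simp: freduced_Cons2)

lemma freduced_cr: "freduced w \<Longrightarrow> freduced (cr l w)"
  by (cases w) (auto simp: cr_def freduced_Cons2 freduced_ConsD)

lemma freduced_fred[simp]: "freduced (fred w)"
  by (induction w) (simp_all add: fred_Cons freduced_cr)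

lemma fred_id: "freduced w \<Longrightarrow> fred w = w"
proof (induction w)
  case (Cons l w)
  then have "fred w = w" using freduced_ConsD by blast
  then show ?case using Cons.prems
    by (cases w) (auto simp: fred_Cons cr_def freduced_Cons2)
qed simp

lemma fred_fred[simp]: "fred (fred w) = fred w" by (simp add: fred_id)

lemma cr_cancel: "freduced w \<Longrightarrow> cr l (cr (linv l) w) = w"
proof (cases w)
  case (Cons m r)
  assume red: "freduced w"
  show ?thesis
  proof (cases "cancels (linv l) m")
    case True
    then have m: "m = l" using cancels_iff by auto
    show ?thesis
    proof (cases r)
      case Nil then show ?thesis using Cons True m by (simp add: cr_def)
    next
      case (Cons n s)
      then have "\<not> cancels m n" using red \<open>w = m # r\<close> by (simp add: freduced_Cons2)
      then show ?thesis using Cons \<open>w = m # r\<close> True m by (simp add: cr_def)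
    qed
  next
    case False
    then show ?thesis using Cons by (simp add: cr_def cancels_iff)
  qed
qed (simp add: cr_def cancels_iff)

lemma fred_append: "fred (u @ v) = foldr cr u (fred v)"
  by (induction u) (simp_all add: fred_Cons)

lemma freduced_foldr: "freduced y \<Longrightarrow> freduced (foldr cr x y)"
  by (induction x) (simp_all add: freduced_cr)

lemma foldr_cr: "freduced y \<Longrightarrow> foldr cr (cr l x) y = cr l (foldr cr x y)"
proof (cases x)
  case Nil then show ?thesis by (simp add: cr_def)
next
  case (Cons m r)
  assume y: "freduced y"
  show ?thesis
  proof (cases "cancels l m")
    case True
    then have "m = linv l" by (simp add: cancels_iff)
    then show ?thesis using Cons True cr_cancel[OF freduced_foldr[OF y], of "l" r]
      by (simp add: cr_def)
  next
    case False
    then show ?thesis using Cons by (simp add: cr_def)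
  qed
qed

lemma fred_append_fred2: "fred (u @ fred v) = fred (u @ v)"
  by (simp add: fred_append)

lemma fred_append_fred1: "fred (fred u @ v) = fred (u @ v)"
proof (induction u)
  case (Cons l u)
  have "fred (fred (l # u) @ v) = foldr cr (cr l (fred u)) (fred v)"
    by (simp add: fred_Cons fred_append)
  also have "\<dots> = cr l (foldr cr (fred u) (fred v))" by (simp add: foldr_cr)
  also have "\<dots> = cr l (fred (u @ v))" using Cons by (simp add: fred_append)
  finally show ?case by (simp add: fred_Cons)
qed simp

lemma winv_Nil[simp]: "winv [] = []" by (simp add: winv_def)
lemma winv_Cons: "winv (l # w) = winv w @ [linv l]"
  by (cases l) (simp add: winv_def linv_def)
lemma winv_append[simp]: "winv (u @ v) = winv v @ winv u" by (simp add: winv_def)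
lemma winv_winv[simp]: "winv (winv u) = u"
  by (induction u) (simp_all add: winv_Cons winv_def linv_def case_prod_beta)
lemma length_winv[simp]: "length (winv u) = length u" by (simp add: winv_def)
lemma set_winv: "fst ` set (winv u) = fst ` set u" by (force simp: winv_def image_iff)

lemma fred_u_winv: "fred (u @ winv u) = []"
proof (induction u)
  case (Cons l u)
  have "fred ((l # u) @ winv (l # u)) = cr l (fred (u @ winv u @ [linv l]))"
    by (simp add: winv_Cons fred_Cons)
  also have "fred (u @ winv u @ [linv l]) = fred (fred (u @ winv u) @ [linv l])"
    by (metis append.assoc fred_append_fred1)
  also have "\<dots> = [linv l]" using Cons by (simp add: fred_Cons cr_def)
  finally show ?case by (simp add: cr_def cancels_iff)
qed simp

lemma fred_winv_u: "fred (winv u @ u) = []"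
  using fred_u_winv[of "winv u"] by simp

lemma fred_cancel_mid: "fred (x @ u @ winv u @ y) = fred (x @ y)"
proof -
  have "fred (u @ winv u @ y) = fred y"
    by (metis append.assoc append.left_neutral fred_append_fred1 fred_u_winv)
  then show ?thesis by (metis fred_append_fred2)
qed

lemma fred_cancel_mid': "fred (x @ winv u @ u @ y) = fred (x @ y)"
  using fred_cancel_mid[of x "winv u" y] by simp

definition img :: "fendo \<Rightarrow> letter \<Rightarrow> letter list" where
  "img \<phi> l = (if snd l then winv (\<phi> (fst l)) else \<phi> (fst l))"

lemma act_img: "act \<phi> w = fred (concat (map (img \<phi>) w))"
  unfolding act_def img_def by (simp add: case_prod_unfold)

lemma img_linv: "img \<phi> (linv l) = winv (img \<phi> l)"
  by (simp add: img_def linv_def)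

lemma act_Nil[simp]: "act \<phi> [] = []" by (simp add: act_img)

lemma act_Cons: "act \<phi> (l # w) = fred (img \<phi> l @ act \<phi> w)"
  by (simp add: act_img fred_append_fred2)

lemma act_append: "act \<phi> (u @ v) = fred (act \<phi> u @ act \<phi> v)"
  by (simp add: act_img fred_append_fred1 fred_append_fred2)

lemma concat_img_cr:
  "fred (concat (map (img \<phi>) (cr l y))) = fred (img \<phi> l @ concat (map (img \<phi>) y))"
proof (cases y)
  case (Cons m r)
  show ?thesis
  proof (cases "cancels l m")
    case True
    then have "m = linv l" by (simp add: cancels_iff)
    then show ?thesis using Cons True fred_cancel_mid[of "[]" "img \<phi> l"]
      by (simp add: cr_def img_linv)
  qed (use Cons in \<open>simp add: cr_def\<close>)
qed (simp add: cr_def)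

lemma act_fred: "act \<phi> (fred u) = act \<phi> u"
proof (induction u)
  case (Cons l u)
  have "act \<phi> (fred (l # u)) = fred (img \<phi> l @ concat (map (img \<phi>) (fred u)))"
    by (simp add: act_img concat_img_cr)
  also have "\<dots> = fred (img \<phi> l @ act \<phi> (fred u))" by (simp add: act_img fred_append_fred2)
  also have "\<dots> = act \<phi> (l # u)" using Cons by (simp add: act_Cons)
  finally show ?case .
qed simp

lemma freduced_nth: "freduced w \<longleftrightarrow> (\<forall>i. Suc i < length w \<longrightarrow> \<not> cancels (w ! i) (w ! Suc i))"
  by (auto simp: freduced_def cancels_def)

lemma cancels_linv: "cancels (linv a) (linv b) \<longleftrightarrow> cancels b a"
  by (auto simp: cancels_def linv_def)

lemma winv_nth: "i < length w \<Longrightarrow> winv w ! i = linv (w ! (length w - Suc i))"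
  by (simp add: winv_def rev_nth linv_def case_prod_beta)

lemma freduced_winv: "freduced w \<Longrightarrow> freduced (winv w)"
  unfolding freduced_nth
proof (intro allI impI)
  fix i assume r: "\<forall>i. Suc i < length w \<longrightarrow> \<not> cancels (w ! i) (w ! Suc i)"
    and i: "Suc i < length (winv w)"
  let ?j = "length w - Suc (Suc i)"
  have j: "Suc ?j < length w" using i by simp
  have e: "length w - Suc i = Suc ?j" using i by simp
  show "\<not> cancels (winv w ! i) (winv w ! Suc i)"
    using r j i by (simp add: winv_nth e cancels_linv)
qed

lemma fred_winv_cr: "freduced y \<Longrightarrow> fred (winv (l # y)) = winv (cr l y)"
proof (cases y)
  case Nil then show ?thesis by (simp add: winv_Cons cr_def)
next
  case (Cons m r)
  assume y: "freduced y"
  show ?thesis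
  proof (cases "cancels l m")
    case True
    then have m: "m = linv l" by (simp add: cancels_iff)
    have r: "freduced r" using y Cons freduced_ConsD by blast
    have "fred (winv (l # y)) = fred (winv r @ [l] @ winv [l])"
      using Cons m by (simp add: winv_Cons)
    also have "\<dots> = fred (winv r)" using fred_cancel_mid[of "winv r" "[l]" "[]"] by simp
    also have "\<dots> = winv r" using r by (simp add: fred_id freduced_winv)
    finally show ?thesis using Cons True by (simp add: cr_def)
  next
    case False
    then have "freduced (l # y)" using y Cons by (simp add: freduced_Cons2)
    then show ?thesis using False Cons by (simp add: cr_def fred_id freduced_winv)
  qed
qed

lemma fred_winv: "fred (winv u) = winv (fred u)"
proof (induction u)
  case (Cons l u)
  have "fred (winv (l # u)) = fred (fred (winv u) @ [linv l])"
    by (simp add: winv_Cons fred_append_fred1)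
  also have "\<dots> = fred (winv (l # fred u))" using Cons by (simp add: winv_Cons)
  also have "\<dots> = winv (cr l (fred u))" by (simp add: fred_winv_cr)
  finally show ?case by simp
qed simp

lemma concat_map_img_winv: "concat (map (img \<phi>) (winv u)) = winv (concat (map (img \<phi>) u))"
proof (induction u)
  case (Cons l u)
  then show ?case by (simp add: winv_Cons img_linv)
qed simp

lemma act_winv: "act \<phi> (winv u) = winv (act \<phi> u)"
  by (simp add: act_img concat_map_img_winv fred_winv)

lemma img_rcomp: "img (rcomp \<phi> \<psi>) l = (if snd l then winv (act \<psi> (\<phi> (fst l))) else act \<psi> (\<phi> (fst l)))"
  by (simp add: img_def rcomp_def)

lemma act_img_eq: "fred (img (rcomp \<phi> \<psi>) l @ x) = fred (act \<psi> (img \<phi> l) @ x)"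
  by (simp add: img_rcomp img_def act_winv rcomp_def)

lemma act_act: "act \<psi> (act \<phi> w) = act (rcomp \<phi> \<psi>) w"
proof (induction w)
  case (Cons l w)
  have "act \<psi> (act \<phi> (l # w)) = act \<psi> (img \<phi> l @ act \<phi> w)"
    by (simp add: act_Cons act_fred)
  also have "\<dots> = fred (act \<psi> (img \<phi> l) @ act (rcomp \<phi> \<psi>) w)"
    using Cons by (simp add: act_append)
  also have "\<dots> = act (rcomp \<phi> \<psi>) (l # w)"
    by (simp add: act_Cons act_img_eq)
  finally show ?case .
qed simp

lemma act_cong: "(\<And>l. l \<in> set w \<Longrightarrow> \<phi> (fst l) = \<psi> (fst l)) \<Longrightarrow> act \<phi> w = act \<psi> w"
proof -
  assume a: "\<And>l. l \<in> set w \<Longrightarrow> \<phi> (fst l) = \<psi> (fst l)"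
  have e: "map (img \<phi>) w = map (img \<psi>) w" by (rule map_cong) (auto simp: img_def a)
  show ?thesis by (simp only: act_img e)
qed

lemma set_fred: "set (fred w) \<subseteq> set w"
proof (induction w)
  case (Cons l w)
  then show ?case by (auto simp: cr_def split: list.splits if_splits)
qed simp

lemma letters_act: "fst ` set (act \<phi> w) \<subseteq> (\<Union>l\<in>set w. fst ` set (\<phi> (fst l)))"
proof -
  have "fst ` set (act \<phi> w) \<subseteq> fst ` set (concat (map (img \<phi>) w))"
    unfolding act_img using set_fred by blast
  also have "\<dots> \<subseteq> (\<Union>l\<in>set w. fst ` set (\<phi> (fst l)))"
  proof
    fix x assume "x \<in> fst ` set (concat (map (img \<phi>) w))"
    then obtain l where l: "l \<in> set w" and x: "x \<in> fst ` set (img \<phi> l)" by auto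
    have "fst ` set (img \<phi> l) = fst ` set (\<phi> (fst l))"
      by (simp add: img_def set_winv)
    then show "x \<in> (\<Union>l\<in>set w. fst ` set (\<phi> (fst l)))" using l x by blast
  qed
  finally show ?thesis .
qed

lemma act_gen: "act gen w = fred w"
proof -
  have "concat (map (img gen) w) = w"
    by (induction w) (auto simp: img_def gen_def winv_def)
  then show ?thesis by (simp add: act_img)
qed

lemma alpha_gen: "alpha j = act (sigma 3) (act (sigma 4) (act (sigma 1) (act (sigma 2) (act (sigma 3) (act (sigma 4) (gen j))))))"
  by (simp add: alpha_def rcomp_def idendo_def)

lemma alpha_1: "alpha 1 = [(1, False), (2, False), (1, True)]"
  by (simp add: alpha_gen act_def sigma_def gen_def winv_def cr_def cancels_def)
lemma alpha_2: "alpha 2 = [(1, False), (3, False), (4, False), (3, True), (1, True)]"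
  by (simp add: alpha_gen act_def sigma_def gen_def winv_def cr_def cancels_def)
lemma alpha_3: "alpha 3 = [(1, False), (3, False), (5, False), (3, True), (1, True)]"
  by (simp add: alpha_gen act_def sigma_def gen_def winv_def cr_def cancels_def)
lemma alpha_4: "alpha 4 = [(1, False), (3, False), (1, True)]"
  by (simp add: alpha_gen act_def sigma_def gen_def winv_def cr_def cancels_def)
lemma alpha_5: "alpha 5 = [(1, False)]"
  by (simp add: alpha_gen act_def sigma_def gen_def winv_def cr_def cancels_def)
lemma alpha_other: "j \<notin> {1..5} \<Longrightarrow> alpha j = [(j, False)]"
  by (simp add: alpha_gen act_def sigma_def gen_def winv_def cr_def cancels_def) arith

lemma alpha_1': "alpha (Suc 0) = [(1, False), (2, False), (1, True)]" using alpha_1 by simp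
lemmas alpha_simps = alpha_1 alpha_1' alpha_2 alpha_3 alpha_4 alpha_5

lemma alpha_letters: "j \<in> {1..5} \<Longrightarrow> fst ` set (alpha j) \<subseteq> {1..5}"
proof -
  assume "j \<in> {1..5}"
  then have "j = 1 \<or> j = 2 \<or> j = 3 \<or> j = 4 \<or> j = 5" by auto
  then show ?thesis by (elim disjE) (simp_all add: alpha_simps)
qed

lemma alpha_iter_letters:
  assumes "fst ` set g \<subseteq> {1..5}"
  shows "fst ` set ((act alpha ^^ p) g) \<subseteq> {1..5}"
proof (induction p)
  case (Suc p)
  have "fst ` set ((act alpha ^^ Suc p) g) \<subseteq> (\<Union>l\<in>set ((act alpha ^^ p) g). fst ` set (alpha (fst l)))"
    using letters_act by simp
  also have "\<dots> \<subseteq> {1..5}" using Suc alpha_letters by blast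
  finally show ?case .
qed (use assms in auto)

fun ab :: "complex \<Rightarrow> letter list \<Rightarrow> complex" where
  "ab t [] = 1"
| "ab t (l # w) = (if snd l then inverse t else t) * ab t w"

lemma foxev_Cons: "foxev t k (l # w) = (if snd l then (if fst l = k then - inverse t else 0) + inverse t * foxev t k w
   else (if fst l = k then 1 else 0) + t * foxev t k w)"
  by (cases l; cases "snd l") auto

declare foxev.simps(2,3)[simp del]

lemma foxev_append: "foxev t k (u @ v) = foxev t k u + ab t u * foxev t k v"
  by (induction u) (auto simp: foxev_Cons algebra_simps)

lemma ab_append: "ab t (u @ v) = ab t u * ab t v"
  by (induction u) auto

lemma foxev_cr: "t \<noteq> 0 \<Longrightarrow> foxev t k (cr l w) = foxev t k (l # w)"
  by (cases w) (auto simp: cr_def cancels_def foxev_Cons field_simps)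

lemma ab_cr: "t \<noteq> 0 \<Longrightarrow> ab t (cr l w) = ab t (l # w)"
  by (cases w) (auto simp: cr_def cancels_def field_simps)

lemma foxev_fred: "t \<noteq> 0 \<Longrightarrow> foxev t k (fred w) = foxev t k w"
  by (induction w) (simp_all add: foxev_cr foxev_Cons)

lemma ab_fred: "t \<noteq> 0 \<Longrightarrow> ab t (fred w) = ab t w"
  by (induction w) (simp_all add: ab_cr)

lemma ab_winv: "t \<noteq> 0 \<Longrightarrow> ab t (winv u) * ab t u = 1"
  using ab_fred[of t "winv u @ u"] by (simp add: fred_winv_u ab_append)

lemma foxev_winv: "t \<noteq> 0 \<Longrightarrow> foxev t k (winv u) = - ab t (winv u) * foxev t k u"
  using foxev_fred[of t k "winv u @ u"] by (simp add: fred_winv_u foxev_append eq_neg_iff_add_eq_0)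

lemma sum5: fixes f :: "nat \<Rightarrow> complex" shows "(\<Sum>i<5. f i) = f 0 + f 1 + f 2 + f 3 + (f 4 :: complex)"
  by (simp add: eval_nat_numeral)

lemma fox_chain:
  assumes t: "t \<noteq> 0" and w: "fst ` set w \<subseteq> {1..5}" and ab: "\<And>j. j \<in> {1..5} \<Longrightarrow> ab t (\<phi> j) = t"
  shows "foxev t k (act \<phi> w) = (\<Sum>i<5. foxev t (Suc i) w * foxev t k (\<phi> (Suc i)))"
proof -
  have "foxev t k (concat (map (img \<phi>) w)) = (\<Sum>i<5. foxev t (Suc i) w * foxev t k (\<phi> (Suc i)))"
    using w
  proof (induction w)
    case Nil then show ?case by simp
  next
    case (Cons l w)
    then have IH: "foxev t k (concat (map (img \<phi>) w)) = (\<Sum>i<5. foxev t (Suc i) w * foxev t k (\<phi> (Suc i)))"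
      by auto
    have j: "fst l \<in> {1..5}" using Cons.prems by auto
    have abj: "ab t (\<phi> (fst l)) = t" using ab j by auto
    have abw: "ab t (winv (\<phi> (fst l))) = inverse t" using ab_winv[OF t, of "\<phi> (fst l)"] abj t
      by (simp add: field_simps)
    have d: "(\<Sum>i<5. (if fst l = Suc i then c else 0) * foxev t k (\<phi> (Suc i))) = c * foxev t k (\<phi> (fst l))" for c
    proof -
      have "fst l = 1 \<or> fst l = 2 \<or> fst l = 3 \<or> fst l = 4 \<or> fst l = 5" using j by auto
      then show ?thesis by (elim disjE) (simp_all add: sum5 eval_nat_numeral)
    qed
    show ?case
    proof (cases "snd l")
      case True
      have "foxev t k (concat (map (img \<phi>) (l # w))) = - inverse t * foxev t k (\<phi> (fst l)) + inverse t * foxev t k (concat (map (img \<phi>) w))"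
        using True by (simp add: img_def foxev_append foxev_winv t abw)
      also have "\<dots> = (\<Sum>i<5. foxev t (Suc i) (l # w) * foxev t k (\<phi> (Suc i)))"
        using True d[of "- inverse t"] by (simp add: IH foxev_Cons distrib_right sum.distrib sum_distrib_left mult.assoc
          if_distrib[of "\<lambda>x. x * _"] cong: if_cong)
      finally show ?thesis .
    next
      case False
      have "foxev t k (concat (map (img \<phi>) (l # w))) = foxev t k (\<phi> (fst l)) + t * foxev t k (concat (map (img \<phi>) w))"
        using False by (simp add: img_def foxev_append abj)
      also have "\<dots> = (\<Sum>i<5. foxev t (Suc i) (l # w) * foxev t k (\<phi> (Suc i)))"
        using False d[of 1] by (simp add: IH foxev_Cons distrib_right sum.distrib sum_distrib_left mult.assoc)
      finally show ?thesis .
    qed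
  qed
  then show ?thesis by (simp add: act_img foxev_fred t)
qed

lemma ab_alpha: "t \<noteq> 0 \<Longrightarrow> j \<in> {1..5} \<Longrightarrow> ab t (alpha j) = t"
proof -
  assume t: "t \<noteq> 0" and "j \<in> {1..5}"
  then have "j = 1 \<or> j = 2 \<or> j = 3 \<or> j = 4 \<or> j = 5" by auto
  then show ?thesis using t by (elim disjE) (simp_all add: alpha_simps field_simps)
qed

lemma burau_carrier: "burau \<phi> t \<in> carrier_mat 5 5"
  by (simp add: burau_def)

lemma gen_letters: "j \<in> {1..5} \<Longrightarrow> fst ` set (gen j) \<subseteq> {1..5}"
  by (simp add: gen_def)

lemma burau_pow:
  assumes t: "t \<noteq> 0" and i: "i < 5" and k: "k < 5"
  shows "(burau alpha t ^\<^sub>m p) $$ (i,k) = foxev t (Suc k) ((act alpha ^^ p) (gen (Suc i)))"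
  using k
proof (induction p arbitrary: k)
  case 0
  then show ?case using i by (simp add: burau_def gen_def foxev_Cons)
next
  case (Suc p)
  let ?A = "burau alpha t"
  have A: "?A \<in> carrier_mat 5 5" by (rule burau_carrier)
  have "(?A ^\<^sub>m Suc p) $$ (i,k) = (\<Sum>j\<in>{0..<5}. (?A ^\<^sub>m p) $$ (i,j) * ?A $$ (j,k))"
    using A i Suc.prems by (simp add: scalar_prod_def)
  also have "\<dots> = (\<Sum>j<5. foxev t (Suc j) ((act alpha ^^ p) (gen (Suc i))) * foxev t (Suc k) (alpha (Suc j)))"
    using Suc.IH Suc.prems by (simp add: lessThan_atLeast0 burau_def)
  also have "\<dots> = foxev t (Suc k) (act alpha ((act alpha ^^ p) (gen (Suc i))))"
    by (rule fox_chain[symmetric]) (use t i alpha_iter_letters[OF gen_letters] ab_alpha in auto)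
  finally show ?case by simp
qed

lemma foxev_bound: "cmod t = 1 \<Longrightarrow> cmod (foxev t k w) \<le> length w"
proof (induction w)
  case (Cons l w)
  have it: "cmod (inverse t) = 1" using Cons.prems by (simp add: norm_inverse)
  have "cmod (foxev t k (l # w)) \<le> 1 + cmod (foxev t k w)"
  proof (cases "snd l")
    case True
    then have "cmod (foxev t k (l # w)) \<le> cmod (if fst l = k then - inverse t else 0) + cmod (inverse t * foxev t k w)"
      by (simp add: foxev_Cons norm_triangle_ineq)
    also have "\<dots> \<le> 1 + cmod (foxev t k w)" using it by (simp add: norm_mult)
    finally show ?thesis .
  next
    case False
    then have "cmod (foxev t k (l # w)) \<le> cmod (if fst l = k then 1 else 0::complex) + cmod (t * foxev t k w)"
      by (simp add: foxev_Cons norm_triangle_ineq)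
    also have "\<dots> \<le> 1 + cmod (foxev t k w)" using Cons.prems by (simp add: norm_mult)
    finally show ?thesis .
  qed
  then show ?case using Cons by simp
qed simp

lemma eig_bound:
  assumes t: "cmod t = 1" and ev: "eigenvalue (burau alpha t) \<mu>"
  shows "\<exists>i<5. \<forall>p. cmod \<mu> ^ p \<le> 5 * real (length ((act alpha ^^ p) (gen (Suc i))))"
proof -
  let ?A = "burau alpha t"
  have A: "?A \<in> carrier_mat 5 5" by (rule burau_carrier)
  have t0: "t \<noteq> 0" using t by auto
  from ev obtain v where evv: "eigenvector ?A v \<mu>" unfolding eigenvalue_def by auto
  then have v: "v \<in> carrier_vec 5" "v \<noteq> 0\<^sub>v 5" "?A *\<^sub>v v = \<mu> \<cdot>\<^sub>v v"
    using A unfolding eigenvector_def by auto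
  define S where "S = (\<lambda>k. cmod (v $ k)) ` {..<5::nat}"
  have Sf: "finite S" "S \<noteq> {}" unfolding S_def by (auto simp: lessThan_empty_iff)
  obtain i0 where i0: "i0 < 5" "cmod (v $ i0) = Max S" using Max_in[OF Sf] unfolding S_def by auto
  have imax: "\<And>k. k < 5 \<Longrightarrow> cmod (v $ k) \<le> cmod (v $ i0)"
    using i0 Max_ge[OF Sf(1)] unfolding S_def by auto
  have vi0: "cmod (v $ i0) > 0"
  proof (rule ccontr)
    assume "\<not> cmod (v $ i0) > 0"
    then have "\<And>k. k < 5 \<Longrightarrow> v $ k = 0" using imax by (metis norm_le_zero_iff order.trans not_less)
    then have "v = 0\<^sub>v 5" using v(1) by (intro eq_vecI) auto
    then show False using v(2) by simp
  qed
  show ?thesis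
  proof (intro exI[of _ i0] conjI allI i0(1))
    fix p
    let ?L = "real (length ((act alpha ^^ p) (gen (Suc i0))))"
    have pw: "?A ^\<^sub>m p *\<^sub>v v = \<mu> ^ p \<cdot>\<^sub>v v" by (rule eigenvector_pow[OF A evv])
    have "\<mu> ^ p * v $ i0 = (?A ^\<^sub>m p *\<^sub>v v) $ i0" using pw v(1) i0(1) by simp
    also have "\<dots> = (\<Sum>k\<in>{0..<5}. (?A ^\<^sub>m p) $$ (i0,k) * v $ k)"
      using A v(1) i0(1) by (simp add: scalar_prod_def)
    finally have eq: "\<mu> ^ p * v $ i0 = (\<Sum>k\<in>{0..<5}. (?A ^\<^sub>m p) $$ (i0,k) * v $ k)" .
    have "cmod \<mu> ^ p * cmod (v $ i0) = cmod (\<Sum>k\<in>{0..<5}. (?A ^\<^sub>m p) $$ (i0,k) * v $ k)"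
      using eq by (metis norm_mult norm_power)
    also have "\<dots> \<le> (\<Sum>k\<in>{0..<5}. cmod ((?A ^\<^sub>m p) $$ (i0,k)) * cmod (v $ k))"
      by (rule order.trans[OF norm_sum]) (simp add: norm_mult)
    also have "\<dots> \<le> (\<Sum>k\<in>{0..<5::nat}. ?L * cmod (v $ i0))"
    proof (rule sum_mono)
      fix k assume k: "k \<in> {0..<5::nat}"
      have "cmod ((?A ^\<^sub>m p) $$ (i0,k)) \<le> ?L"
        using burau_pow[OF t0 i0(1), of k p] k foxev_bound[OF t] by simp
      then show "cmod ((?A ^\<^sub>m p) $$ (i0,k)) * cmod (v $ k) \<le> ?L * cmod (v $ i0)"
        using imax[of k] k by (intro mult_mono) auto
    qed
    also have "\<dots> = (5 * ?L) * cmod (v $ i0)" by simp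
    finally show "cmod \<mu> ^ p \<le> 5 * ?L" using vi0 by simp
  qed
qed

definition Pm :: fendo where
  "Pm j = (if j = 1 then [(1, False)]
     else if j = 2 then [(6, False), (2, False), (6, True)]
     else if j = 3 then [(6, False), (7, False), (3, False), (7, True), (6, True)]
     else if j = 4 then [(6, False), (7, False), (8, False), (4, False), (8, True), (7, True), (6, True)]
     else if j = 5 then [(6, False), (7, False), (8, False), (9, False), (5, False), (9, True), (8, True), (7, True), (6, True)]
     else [])"

definition Qm :: fendo where
  "Qm j = (if j \<in> {1..5} then gen j else [])"

definition dl :: "letter list" where "dl = [(1, False), (6, False)]"

definition F0 :: fendo where
  "F0 j = (if j = 1 then [(2, False)] else if j = 2 then [(4, False)] else if j = 3 then [(5, False)]
     else if j = 4 then [(3, False)] else if j = 5 then [(1, False)]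
     else if j = 6 then [(7, False), (3, False), (8, False)]
     else if j = 7 then [(9, False)]
     else if j = 8 then [(9, True), (8, True), (3, True)]
     else if j = 9 then [(7, True), (6, True)] else [])"

definition Fm :: fendo where
  "Fm j = dl @ F0 j @ winv dl"

lemma five_cases: "j \<in> {1..5} \<Longrightarrow> j = 1 \<or> j = 2 \<or> j = 3 \<or> j = 4 \<or> j = (5::nat)"
  by auto

lemma PQ: "j \<in> {1..5} \<Longrightarrow> rcomp Pm Qm j = gen j"
  by (drule five_cases) (auto simp: rcomp_def Pm_def Qm_def act_def gen_def winv_def cr_def cancels_def)

lemma PF: "j \<in> {1..5} \<Longrightarrow> rcomp alpha Pm j = rcomp Pm Fm j"
  by (drule five_cases) (auto simp: rcomp_def alpha_simps Pm_def Fm_def F0_def dl_def act_def winv_def cr_def cancels_def)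

lemma act_P_alpha:
  assumes "fst ` set w \<subseteq> {1..5}"
  shows "act Pm (act alpha w) = act Fm (act Pm w)"
proof -
  have "act Pm (act alpha w) = act (rcomp alpha Pm) w" by (rule act_act)
  also have "\<dots> = act (rcomp Pm Fm) w" using assms PF by (intro act_cong) auto
  also have "\<dots> = act Fm (act Pm w)" by (rule act_act[symmetric])
  finally show ?thesis .
qed

lemma act_Q_P:
  assumes "fst ` set w \<subseteq> {1..5}"
  shows "act Qm (act Pm w) = fred w"
proof -
  have "act Qm (act Pm w) = act (rcomp Pm Qm) w" by (rule act_act)
  also have "\<dots> = act gen w" using assms PQ by (intro act_cong) auto
  finally show ?thesis by (simp add: act_gen)
qed

lemma iter_P:
  assumes "fst ` set g \<subseteq> {1..5}"
  shows "act Pm ((act alpha ^^ p) g) = (act Fm ^^ p) (act Pm g)"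
proof (induction p)
  case (Suc p)
  then show ?case using act_P_alpha[OF alpha_iter_letters[OF assms, of p]] by simp
qed simp

lemma fred_iter: "freduced g \<Longrightarrow> fred ((act \<phi> ^^ p) g) = (act \<phi> ^^ p) g"
  by (cases p) (simp_all add: fred_id act_def)

definition W :: "(nat \<Rightarrow> real) \<Rightarrow> letter list \<Rightarrow> real" where
  "W h u = sum_list (map (\<lambda>l. h (fst l)) u)"

lemma W_Nil[simp]: "W h [] = 0" by (simp add: W_def)
lemma W_Cons[simp]: "W h (l # u) = h (fst l) + W h u" by (simp add: W_def)
lemma W_append[simp]: "W h (u @ v) = W h u + W h v" by (simp add: W_def)
lemma W_winv[simp]: "W h (winv u) = W h u"
  by (induction u) (simp_all add: winv_Cons)

lemma W_cr: "(\<And>j. h j \<ge> 0) \<Longrightarrow> W h (cr l w) \<le> h (fst l) + W h w"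
  by (cases w) (auto simp: cr_def add_increasing)

lemma W_fred: "(\<And>j. h j \<ge> 0) \<Longrightarrow> W h (fred u) \<le> W h u"
proof (induction u)
  case (Cons l u)
  then show ?case using W_cr[of h l "fred u"] by fastforce
qed simp

lemma W_act: "(\<And>j. h j \<ge> 0) \<Longrightarrow> W h (act \<phi> u) \<le> sum_list (map (\<lambda>l. W h (\<phi> (fst l))) u)"
proof -
  assume h: "\<And>j. h j \<ge> 0"
  have "W h (concat (map (img \<phi>) u)) = sum_list (map (\<lambda>l. W h (\<phi> (fst l))) u)"
    by (induction u) (simp_all add: img_def)
  then show ?thesis using W_fred[of h, OF h, of "concat (map (img \<phi>) u)"] by (simp add: act_img)
qed

lemma length_cr: "length (cr l w) \<le> Suc (length w)"
  by (cases w) (auto simp: cr_def)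

lemma length_fred: "length (fred u) \<le> length u"
proof (induction u)
  case (Cons l u) then show ?case using length_cr[of l "fred u"] by simp
qed simp

definition hc :: "nat \<Rightarrow> real" where "hc j = (if j \<in> {1..5} then 1 else 0)"

lemma length_act_Q: "real (length (act Qm u)) \<le> W hc u"
proof -
  have "real (length (concat (map (img Qm) u))) = W hc u"
    by (induction u) (simp_all add: img_def Qm_def hc_def gen_def winv_def)
  then show ?thesis using length_fred[of "concat (map (img Qm) u)"] by (simp add: act_img)
qed

lemma fred_conj_concat:
  "fred (concat (map (\<lambda>l. d @ G l @ winv d) u)) = fred (d @ concat (map G u) @ winv d)"
proof (induction u)
  case Nil then show ?case by (simp add: fred_u_winv)
next
  case (Cons l u)
  have "fred (concat (map (\<lambda>l. d @ G l @ winv d) (l # u)))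
      = fred ((d @ G l @ winv d) @ fred (concat (map (\<lambda>l. d @ G l @ winv d) u)))"
    using fred_append_fred2[of "d @ G l @ winv d" "concat (map (\<lambda>l. d @ G l @ winv d) u)"] by simp
  also have "\<dots> = fred ((d @ G l @ winv d) @ (d @ concat (map G u) @ winv d))"
    by (simp only: Cons fred_append_fred2)
  also have "\<dots> = fred ((d @ G l) @ winv d @ d @ (concat (map G u) @ winv d))" by simp
  also have "\<dots> = fred ((d @ G l) @ (concat (map G u) @ winv d))" by (rule fred_cancel_mid')
  finally show ?case by simp
qed

lemma act_Fm: "act Fm u = fred (dl @ act F0 u @ winv dl)"
proof -
  have e: "map (img Fm) u = map (\<lambda>l. dl @ img F0 l @ winv dl) u"
    by (rule map_cong) (auto simp: img_def Fm_def)
  have "act Fm u = fred (dl @ concat (map (img F0) u) @ winv dl)"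
    by (simp only: act_img e fred_conj_concat)
  also have "\<dots> = fred (dl @ act F0 u @ winv dl)"
    by (metis act_img append.assoc fred_append_fred1 fred_append_fred2)
  finally show ?thesis .
qed

lemma W_act_Fm:
  assumes h: "\<And>j. h j \<ge> 0"
  shows "W h (act Fm u) \<le> 2 * W h dl + sum_list (map (\<lambda>l. W h (F0 (fst l))) u)"
proof -
  have "W h (act Fm u) \<le> W h (dl @ act F0 u @ winv dl)" unfolding act_Fm by (rule W_fred[of h, OF h])
  also have "\<dots> = 2 * W h dl + W h (act F0 u)" by simp
  also have "\<dots> \<le> 2 * W h dl + sum_list (map (\<lambda>l. W h (F0 (fst l))) u)"
    using W_act[OF h] by simp
  finally show ?thesis .
qed

lemma sum_list_mono_W:
  assumes "\<And>j. f j \<le> a * h j + b * g j"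
  shows "sum_list (map (\<lambda>l. f (fst l)) u) \<le> a * W h u + b * W g u"
proof (induction u)
  case (Cons l u)
  then show ?case using assms[of "fst l"] by (simp add: algebra_simps)
qed simp

locale lamloc =
  fixes L :: real
  assumes L1: "L > 1" and Lq: "L ^ 4 - L ^ 3 - L ^ 2 - L + 1 = 0"
begin

definition wt :: "nat \<Rightarrow> real" where
  "wt j = (if j = 6 then L - 1 / L else if j = 7 then 1 / L else if j = 8 then 1 / (L - 1)
     else if j = 9 then 1 else 0)"

definition K :: real where "K = 1 / (L - 1 / L) + (L - 1)"

lemma w1pos: "L - 1 / L > 0"
proof -
  have "1 / L < 1" using L1 by simp
  then show ?thesis using L1 by linarith
qed

lemma wt_nonneg: "wt j \<ge> 0"
  using L1 w1pos by (simp add: wt_def)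

lemma hc_nonneg: "hc j \<ge> 0" by (simp add: hc_def)

lemma key_eq: "1 / L + 1 / (L - 1) = L * (L - 1 / L)"
proof -
  have L0: "L \<noteq> 0" "L - 1 \<noteq> 0" "L * (L - 1) \<noteq> 0" using L1 by auto
  have e0: "(L ^ 2 - 1) * (L * (L - 1)) = L ^ 4 - L ^ 3 - L ^ 2 + L"
    by (simp add: eval_nat_numeral algebra_simps)
  have e: "2 * L - 1 = (L ^ 2 - 1) * (L * (L - 1))" using Lq e0 by linarith
  have "1 / L + 1 / (L - 1) = (2 * L - 1) / (L * (L - 1))" using L0 by (simp add: field_simps)
  also have "\<dots> = L ^ 2 - 1" unfolding e using L0(3) by simp
  also have "\<dots> = L * (L - 1 / L)" using L0 by (simp add: field_simps power2_eq_square)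
  finally show ?thesis .
qed

lemma F0_wt: "W wt (F0 j) \<le> L * wt j + 0 * wt j"
proof -
  have L0: "L \<noteq> 0" "L - 1 \<noteq> 0" using L1 by auto
  consider "j = 6" | "j = 7" | "j = 8" | "j = 9" | "j \<noteq> 6 \<and> j \<noteq> 7 \<and> j \<noteq> 8 \<and> j \<noteq> 9" by blast
  then show ?thesis
  proof cases
    case 1 then show ?thesis using key_eq by (simp add: F0_def wt_def)
  next
    case 2 then show ?thesis using L0 by (simp add: F0_def wt_def)
  next
    case 3 then show ?thesis using L0 by (simp add: F0_def wt_def field_simps)
  next
    case 4 then show ?thesis using L0 by (simp add: F0_def wt_def field_simps)
  next
    case 5 then show ?thesis by (auto simp: F0_def wt_def)
  qed
qed

lemma K_ge1: "K * (L - 1 / L) \<ge> 1"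
proof -
  have "K * (L - 1 / L) = 1 + (L - 1) * (L - 1 / L)" using w1pos by (simp add: K_def field_simps)
  then show ?thesis using L1 w1pos by simp
qed

lemma K_ge2: "K * (1 / (L - 1)) \<ge> 1"
proof -
  have "K * (1 / (L - 1)) = (1 / (L - 1 / L)) * (1 / (L - 1)) + (L - 1) * (1 / (L - 1))"
    unfolding K_def by (rule distrib_right)
  also have "(L - 1) * (1 / (L - 1)) = 1" using L1 by simp
  finally have e: "K * (1 / (L - 1)) = (1 / (L - 1 / L)) * (1 / (L - 1)) + 1" .
  have "(1 / (L - 1 / L)) * (1 / (L - 1)) \<ge> 0" using L1 w1pos by simp
  then show ?thesis using e by simp
qed

lemma F0_hc: "W hc (F0 j) \<le> 1 * hc j + K * wt j"
proof -
  have Kn: "K \<ge> 0" using L1 w1pos by (simp add: K_def)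
  consider "j = 6" | "j = 8" | "j \<noteq> 6 \<and> j \<noteq> 8" by blast
  then show ?thesis
  proof cases
    case 1 then show ?thesis using K_ge1 by (simp add: F0_def wt_def hc_def)
  next
    case 2 then show ?thesis using K_ge2 by (simp add: F0_def wt_def hc_def)
  next
    case 3
    then have "W hc (F0 j) = hc j" by (auto simp: F0_def hc_def)
    then show ?thesis using Kn wt_nonneg[of j] by simp
  qed
qed

lemma T_step: "W wt (act Fm u) \<le> 2 * (L - 1 / L) + L * W wt u"
proof -
  have "W wt (act Fm u) \<le> 2 * W wt dl + sum_list (map (\<lambda>l. W wt (F0 (fst l))) u)"
    by (rule W_act_Fm[OF wt_nonneg])
  also have "sum_list (map (\<lambda>l. W wt (F0 (fst l))) u) \<le> L * W wt u + 0 * W wt u"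
    by (rule sum_list_mono_W[OF F0_wt])
  finally show ?thesis by (simp add: dl_def wt_def)
qed

lemma C_step: "W hc (act Fm u) \<le> 2 + W hc u + K * W wt u"
proof -
  have "W hc (act Fm u) \<le> 2 * W hc dl + sum_list (map (\<lambda>l. W hc (F0 (fst l))) u)"
    by (rule W_act_Fm[OF hc_nonneg])
  also have "sum_list (map (\<lambda>l. W hc (F0 (fst l))) u) \<le> 1 * W hc u + K * W wt u"
    by (rule sum_list_mono_W[OF F0_hc])
  finally show ?thesis by (simp add: dl_def hc_def)
qed

definition a0 :: real where "a0 = 2 * (L - 1 / L) / (L - 1)"

lemma a0_pos: "a0 > 0" using L1 w1pos by (simp add: a0_def)

lemma T_iter: "W wt ((act Fm ^^ p) u) + a0 \<le> L ^ p * (W wt u + a0)"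
proof (induction p)
  case (Suc p)
  have "W wt ((act Fm ^^ Suc p) u) + a0 \<le> 2 * (L - 1 / L) + L * W wt ((act Fm ^^ p) u) + a0"
    using T_step by simp
  also have "\<dots> = L * (W wt ((act Fm ^^ p) u) + a0)"
    using L1 by (simp add: a0_def field_simps)
  also have "\<dots> \<le> L * (L ^ p * (W wt u + a0))" using Suc L1 by simp
  finally show ?case by simp
qed simp

lemma T_bound: "W wt ((act Fm ^^ p) u) \<le> L ^ p * (W wt u + a0)"
  using T_iter[of p u] a0_pos by linarith

lemma W_nonneg: "(\<And>j. h j \<ge> 0) \<Longrightarrow> W h u \<ge> 0"
  by (induction u) (auto simp: add_nonneg_nonneg)

lemma C_iter: "W hc ((act Fm ^^ p) u) \<le> W hc u + real p * (2 + K * (W wt u + a0) * L ^ p)"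
proof (induction p)
  case (Suc p)
  have Kn: "K \<ge> 0" using L1 w1pos by (simp add: K_def)
  have S: "W wt u + a0 \<ge> 0" using a0_pos W_nonneg[of wt u, OF wt_nonneg] by simp
  define X where "X = K * (W wt u + a0) * L ^ p"
  define Y where "Y = K * (W wt u + a0) * L ^ Suc p"
  have XY: "X \<le> Y" unfolding X_def Y_def using Kn S L1
    by (intro mult_left_mono) (auto intro: mult_nonneg_nonneg)
  have "W hc ((act Fm ^^ Suc p) u) \<le> 2 + W hc ((act Fm ^^ p) u) + K * W wt ((act Fm ^^ p) u)"
    using C_step by simp
  also have "K * W wt ((act Fm ^^ p) u) \<le> X"
    unfolding X_def using mult_left_mono[OF T_bound Kn] by (simp add: mult.assoc mult.commute mult.left_commute)
  also have "W hc ((act Fm ^^ p) u) \<le> W hc u + real p * (2 + X)" using Suc by (simp add: X_def)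
  finally have "W hc ((act Fm ^^ Suc p) u) \<le> W hc u + real p * (2 + X) + 2 + X" by simp
  also have "\<dots> \<le> W hc u + real (Suc p) * (2 + Y)"
  proof -
    have "real p * (2 + X) \<le> real p * (2 + Y)" using XY by (intro mult_left_mono) auto
    then show ?thesis using XY by (simp add: algebra_simps)
  qed
  finally show ?case by (simp add: Y_def)
qed simp

lemma growth_bound:
  assumes g: "fst ` set g \<subseteq> {1..5}" "freduced g"
  shows "\<exists>D>0. \<forall>p. real (length ((act alpha ^^ p) g)) \<le> D * (real p + 1) * L ^ p"
proof -
  define u where "u = act Pm g"
  define D where "D = W hc u + 2 + K * (W wt u + a0) + 1"
  have Kn: "K \<ge> 0" using L1 w1pos by (simp add: K_def)
  have S: "W wt u + a0 \<ge> 0" using a0_pos W_nonneg[of wt u, OF wt_nonneg] by simp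
  have C0: "W hc u \<ge> 0" using W_nonneg[of hc u, OF hc_nonneg] .
  have Dpos: "D > 0" unfolding D_def using Kn S C0 by (simp add: add_pos_nonneg)
  show ?thesis
  proof (intro exI[of _ D] conjI allI Dpos)
    fix p
    have Lp: "L ^ p \<ge> 1" using L1 by simp
    have "(act alpha ^^ p) g = act Qm (act Pm ((act alpha ^^ p) g))"
      using act_Q_P[OF alpha_iter_letters[OF g(1), of p]] fred_iter[OF g(2)] by simp
    also have "\<dots> = act Qm ((act Fm ^^ p) u)" unfolding u_def using iter_P[OF g(1)] by simp
    finally have "real (length ((act alpha ^^ p) g)) \<le> W hc ((act Fm ^^ p) u)"
      using length_act_Q by simp
    also have "\<dots> \<le> W hc u + real p * (2 + K * (W wt u + a0) * L ^ p)" by (rule C_iter)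
    also have "\<dots> \<le> D * (real p + 1) * L ^ p"
    proof -
      define X where "X = K * (W wt u + a0) * L ^ p"
      have f1: "W hc u \<le> W hc u * L ^ p" using C0 Lp by (simp add: mult_le_cancel_left1)
      have f2: "real p * 2 \<le> real p * (2 * L ^ p)" using Lp by (intro mult_left_mono) auto
      have f3: "0 \<le> real p * (W hc u * L ^ p)" using C0 Lp by simp
      have f4: "X \<ge> 0" unfolding X_def using Kn S Lp by simp
      have eq1: "(real p + 1) * ((W hc u + 2 + K * (W wt u + a0)) * L ^ p)
        = real p * (W hc u * L ^ p) + real p * (2 * L ^ p) + real p * X + W hc u * L ^ p + 2 * L ^ p + X"
        unfolding X_def by (simp add: algebra_simps)
      have eq2: "W hc u + real p * (2 + K * (W wt u + a0) * L ^ p) = W hc u + real p * 2 + real p * X"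
        unfolding X_def by (simp add: algebra_simps)
      have "W hc u + real p * (2 + K * (W wt u + a0) * L ^ p)
          \<le> (real p + 1) * ((W hc u + 2 + K * (W wt u + a0)) * L ^ p)"
        unfolding eq1 eq2 using f1 f2 f3 f4 Lp by linarith
      also have "\<dots> \<le> (real p + 1) * (D * L ^ p)" unfolding D_def using Lp by (intro mult_left_mono) auto
      finally show ?thesis by (simp add: mult_ac)
    qed
    finally show "real (length ((act alpha ^^ p) g)) \<le> D * (real p + 1) * L ^ p" .
  qed
qed

end

lemma det_mat0: "det (mat 0 0 f) = 1" by (rule det_dim_zero) auto

lemma det_expand: "det (mat (Suc n) (Suc n) f :: 'a :: comm_ring_1 mat) =
  (\<Sum>j<Suc n. f (0,j) * ((-1)^j * det (mat n n (\<lambda>(i,k). f (Suc i, if k < j then k else Suc k)))))"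
proof -
  have A: "mat (Suc n) (Suc n) f \<in> carrier_mat (Suc n) (Suc n)" by simp
  have md: "mat_delete (mat (Suc n) (Suc n) f) 0 j = mat n n (\<lambda>(i,k). f (Suc i, if k < j then k else Suc k))"
    if "j < Suc n" for j
    using that by (intro eq_matI) (auto simp: mat_delete_def)
  show ?thesis
    by (subst laplace_expansion_row[OF A, of 0]) (auto simp: cofactor_def md intro!: sum.cong)
qed

lemma alpha_S2: "alpha (Suc (Suc 0)) = [(1, False), (3, False), (4, False), (3, True), (1, True)]"
  by (simp add: alpha_gen act_def sigma_def gen_def winv_def cr_def cancels_def eval_nat_numeral)
lemma alpha_S3: "alpha (Suc (Suc (Suc 0))) = [(1, False), (3, False), (5, False), (3, True), (1, True)]"
  by (simp add: alpha_gen act_def sigma_def gen_def winv_def cr_def cancels_def eval_nat_numeral)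
lemma alpha_S4: "alpha (Suc (Suc (Suc (Suc 0)))) = [(1, False), (3, False), (1, True)]"
  by (simp add: alpha_gen act_def sigma_def gen_def winv_def cr_def cancels_def eval_nat_numeral)
lemma alpha_S5: "alpha (Suc (Suc (Suc (Suc (Suc 0))))) = [(1, False)]"
  by (simp add: alpha_gen act_def sigma_def gen_def winv_def cr_def cancels_def eval_nat_numeral)
lemmas alpha_Suc = alpha_1' alpha_S2 alpha_S3 alpha_S4 alpha_S5


definition Mb :: "complex list list" where
  "Mb = [[2,-1,0,0,0],[2,0,-2,1,0],[2,0,-2,0,1],[2,0,-1,0,0],[1,0,0,0,0]]"

lemma burau_m1: "burau alpha (-1) = mat 5 5 (\<lambda>(i,k). Mb ! i ! k)"
proof (rule eq_matI)
  fix i k assume "i < dim_row (mat 5 5 (\<lambda>(i,k). Mb ! i ! k))" "k < dim_col (mat 5 5 (\<lambda>(i,k). Mb ! i ! k))"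
  then have "i < 5" "k < 5" by auto
  then have "i \<in> {0,1,2,3,4}" "k \<in> {0,1,2,3,4}" by auto
  then show "burau alpha (-1) $$ (i, k) = mat 5 5 (\<lambda>(i,k). Mb ! i ! k) $$ (i, k)"
    by (auto simp: burau_def Mb_def alpha_Suc foxev_Cons eval_nat_numeral)
qed (auto simp: burau_def)

lemma cpm: "char_poly_matrix (mat 5 5 (\<lambda>(i,k). Mb ! i ! k)) =
   mat 5 5 (\<lambda>(i,k). (if i = k then [:0,1:] else 0) + [:- (Mb ! i ! k):])"
  by (intro eq_matI) (auto simp: char_poly_matrix_def)

lemma cp_B: "char_poly (burau alpha (-1)) = [:-1, 1:] * [:1, 1, -1, 1, 1:]"
  unfolding burau_m1 char_poly_def cpm
  by (simp add: det_expand det_mat0 eval_nat_numeral Mb_def)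

lemma lam_props: "lam > 1 \<and> lam ^ 4 - lam ^ 3 - lam ^ 2 - lam + 1 = 0"
proof -
  define S where "S = {x::real. 0 < x \<and> x ^ 4 - x ^ 3 - x ^ 2 - x + 1 = 0}"
  define f where "f = (\<lambda>x::real. x ^ 4 - x ^ 3 - x ^ 2 - x + 1)"
  have pe: "poly [:1, -1, -1, -1, 1:] x = f x" for x :: real
    by (simp add: f_def algebra_simps eval_nat_numeral)
  have "[:1, -1, -1, -1, 1::real:] \<noteq> 0" by simp
  then have "finite {x. poly [:1, -1, -1, -1, 1::real:] x = 0}" by (rule poly_roots_finite)
  moreover have "S \<subseteq> {x. poly [:1, -1, -1, -1, 1::real:] x = 0}"
  proof
    fix x assume "x \<in> S"
    then have "f x = 0" by (simp add: S_def f_def)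
    then show "x \<in> {x. poly [:1, -1, -1, -1, 1::real:] x = 0}" using pe[of x] by simp
  qed
  ultimately have fin: "finite S" by (rule finite_subset[rotated])
  have "\<exists>x. 1 \<le> x \<and> x \<le> 2 \<and> f x = 0"
    by (rule IVT') (auto simp: f_def intro!: continuous_intros)
  then obtain x0 where x0: "1 \<le> x0" "f x0 = 0" by auto
  have "x0 \<noteq> 1" using x0 by (auto simp: f_def)
  then have x01: "x0 > 1" using x0 by simp
  have x0S: "x0 \<in> S" using x0 x01 by (simp add: S_def f_def)
  have lamS: "lam = Max S" by (simp add: lam_def S_def)
  have "lam \<in> S" unfolding lamS using fin x0S by (intro Max_in) auto
  moreover have "lam \<ge> x0" unfolding lamS using fin x0S by (intro Max_ge)
  ultimately show ?thesis using x01 by (simp add: S_def)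
qed

interpretation lam: lamloc lam
  using lam_props by unfold_locales auto

lemma pow_powr: "0 \<le> (x::real) \<Longrightarrow> 0 < p \<Longrightarrow> (x ^ p) powr (1 / real p) = x"
proof -
  assume x: "0 \<le> x" and p: "0 < p"
  show ?thesis
  proof (cases "x = 0")
    case True then show ?thesis using p by simp
  next
    case False
    then have "x > 0" using x by simp
    then have "(x ^ p) powr (1 / real p) = (x powr real p) powr (1 / real p)" by (simp add: powr_realpow)
    also have "\<dots> = x" using p \<open>x > 0\<close> by (simp add: powr_powr)
    finally show ?thesis .
  qed
qed

lemma lim1: "D > 0 \<Longrightarrow> (\<lambda>p. (D * (real p + 1)) powr (1 / real p)) \<longlonglongrightarrow> 1"
  by real_asymp

lemma lim2: "(\<lambda>p. (1 / 5 :: real) powr (1 / real p)) \<longlonglongrightarrow> 1"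
  by real_asymp

lemma limsup_upper:
  assumes g: "g \<in> F5"
  shows "limsup (\<lambda>p. ereal (real (length ((act alpha ^^ p) g)) powr (1 / real p))) \<le> ereal lam"
proof -
  have gl: "fst ` set g \<subseteq> {1..5}" "freduced g" using g by (auto simp: F5_def)
  obtain D where D: "D > 0" "\<And>p. real (length ((act alpha ^^ p) g)) \<le> D * (real p + 1) * lam ^ p"
    using lam.growth_bound[OF gl] by blast
  have l1: "lam > 1" using lam_props by simp
  have ev: "eventually (\<lambda>p. ereal (real (length ((act alpha ^^ p) g)) powr (1 / real p))
      \<le> ereal ((D * (real p + 1)) powr (1 / real p) * lam)) sequentially"
    using eventually_ge_at_top[of 1]
  proof eventually_elim
    case (elim p)
    have "real (length ((act alpha ^^ p) g)) powr (1 / real p) \<le> (D * (real p + 1) * lam ^ p) powr (1 / real p)"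
      using D by (intro powr_mono2) auto
    also have "\<dots> = (D * (real p + 1)) powr (1 / real p) * (lam ^ p) powr (1 / real p)"
      by (rule powr_mult)
    also have "(lam ^ p) powr (1 / real p) = lam" using l1 elim by (intro pow_powr) auto
    finally show ?case by simp
  qed
  have "(\<lambda>p. (D * (real p + 1)) powr (1 / real p) * lam) \<longlonglongrightarrow> 1 * lam"
    by (intro tendsto_mult lim1 D tendsto_const)
  then have lim: "(\<lambda>p. ereal ((D * (real p + 1)) powr (1 / real p) * lam)) \<longlonglongrightarrow> ereal lam"
    by (simp add: lim_ereal)
  have "limsup (\<lambda>p. ereal (real (length ((act alpha ^^ p) g)) powr (1 / real p)))
      \<le> limsup (\<lambda>p. ereal ((D * (real p + 1)) powr (1 / real p) * lam))"
    by (rule Limsup_mono[OF ev])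
  also have "\<dots> = ereal lam" by (rule lim_imp_Limsup[OF _ lim]) simp
  finally show ?thesis .
qed

lemma limsup_lower:
  fixes len :: "nat \<Rightarrow> nat"
  assumes b: "\<And>p. c ^ p \<le> 5 * real (len p)" and c: "c \<ge> 0"
  shows "ereal c \<le> limsup (\<lambda>p. ereal (real (len p) powr (1 / real p)))"
proof -
  have ev: "eventually (\<lambda>p. ereal (c * (1 / 5) powr (1 / real p)) \<le> ereal (real (len p) powr (1 / real p))) sequentially"
    using eventually_ge_at_top[of 1]
  proof eventually_elim
    case (elim p)
    have "c * (1 / 5) powr (1 / real p) = (c ^ p) powr (1 / real p) * (1 / 5) powr (1 / real p)"
      using c elim by (simp add: pow_powr)
    also have "\<dots> = (c ^ p * (1 / 5)) powr (1 / real p)"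
      by (rule powr_mult[symmetric])
    also have "\<dots> \<le> real (len p) powr (1 / real p)"
      using b[of p] c by (intro powr_mono2) auto
    finally show ?case by simp
  qed
  have "(\<lambda>p. c * (1 / 5 :: real) powr (1 / real p)) \<longlonglongrightarrow> c * 1"
    by (intro tendsto_mult lim2 tendsto_const)
  then have lim: "(\<lambda>p. ereal (c * (1 / 5) powr (1 / real p))) \<longlonglongrightarrow> ereal c"
    by (simp add: lim_ereal)
  have "ereal c = limsup (\<lambda>p. ereal (c * (1 / 5) powr (1 / real p)))"
    by (rule lim_imp_Limsup[OF _ lim, symmetric]) simp
  also have "\<dots> \<le> limsup (\<lambda>p. ereal (real (len p) powr (1 / real p)))"
    by (rule Limsup_mono[OF ev])
  finally show ?thesis .
qed

lemma GR_le: "GR alpha \<le> ereal lam"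
  unfolding GR_def by (rule SUP_least) (rule limsup_upper)

lemma gen_F5: "j \<in> {1..5} \<Longrightarrow> gen j \<in> F5"
  by (simp add: F5_def gen_def)

lemma R_le:
  assumes t: "cmod t = 1"
  shows "ereal (spectral_radius (burau alpha t)) \<le> GR alpha"
proof -
  have A: "burau alpha t \<in> carrier_mat 5 5" by (rule burau_carrier)
  obtain \<mu> where mu: "\<mu> \<in> spectrum (burau alpha t)" "spectral_radius (burau alpha t) = cmod \<mu>"
    using spectral_radius_mem_max(1)[OF A] by auto
  have ev: "eigenvalue (burau alpha t) \<mu>" using mu(1) by (simp add: spectrum_def)
  obtain i where i: "i < 5" "\<And>p. cmod \<mu> ^ p \<le> 5 * real (length ((act alpha ^^ p) (gen (Suc i))))"
    using eig_bound[OF t ev] by blast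
  have "ereal (cmod \<mu>) \<le> limsup (\<lambda>p. ereal (real (length ((act alpha ^^ p) (gen (Suc i)))) powr (1 / real p)))"
    by (rule limsup_lower[OF i(2)]) simp
  also have "\<dots> \<le> GR alpha" unfolding GR_def
    by (rule SUP_upper) (rule gen_F5, use i in auto)
  finally show ?thesis using mu by simp
qed

theorem mainTheorem8:
  shows "alpha 1 = [(1, False), (2, False), (1, True)]
    \<and> alpha 2 = [(1, False), (3, False), (4, False), (3, True), (1, True)]
    \<and> alpha 3 = [(1, False), (3, False), (5, False), (3, True), (1, True)]
    \<and> alpha 4 = [(1, False), (3, False), (1, True)]
    \<and> alpha 5 = [(1, False)]
    \<and> char_poly (burau alpha (-1)) = [:-1, 1:] * [:1, 1, -1, 1, 1:]
    \<and> poly (char_poly (burau alpha (-1))) (- complex_of_real lam) = 0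
    \<and> GR alpha = ereal lam
    \<and> spectral_radius (burau alpha (-1)) = lam
    \<and> (SUP t\<in>{t::complex. cmod t = 1}. ereal (spectral_radius (burau alpha t))) = GR alpha"
proof -
  have lp: "lam > 1" "lam ^ 4 - lam ^ 3 - lam ^ 2 - lam + 1 = 0" using lam_props by auto
  have q: "poly [:1, 1, -1, 1, 1:] (- complex_of_real lam) = complex_of_real (lam ^ 4 - lam ^ 3 - lam ^ 2 - lam + 1)"
    by (simp add: algebra_simps eval_nat_numeral)
  have root: "poly (char_poly (burau alpha (-1))) (- complex_of_real lam) = 0"
    unfolding cp_B poly_mult q lp(2) by simp
  have A: "burau alpha (-1) \<in> carrier_mat 5 5" by (rule burau_carrier)
  have sp: "- complex_of_real lam \<in> spectrum (burau alpha (-1))"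
    using root by (simp add: spectrum_root_char_poly[OF A])
  have "norm (- complex_of_real lam) \<le> spectral_radius (burau alpha (-1))"
    using spectral_radius_mem_max(2)[OF A _ imageI[OF sp]] by simp
  then have Rge: "lam \<le> spectral_radius (burau alpha (-1))" using lp(1) by simp
  have Rle: "ereal (spectral_radius (burau alpha (-1))) \<le> GR alpha" by (rule R_le) simp
  have GRle: "GR alpha \<le> ereal lam" by (rule GR_le)
  have R: "spectral_radius (burau alpha (-1)) = lam" using Rge Rle GRle
    by (metis antisym ereal_less_eq(3) order_trans)
  have GR: "GR alpha = ereal lam" using Rle GRle R by simp
  have SUP: "(SUP t\<in>{t::complex. cmod t = 1}. ereal (spectral_radius (burau alpha t))) = GR alpha"
  proof (rule antisym)
    show "(SUP t\<in>{t::complex. cmod t = 1}. ereal (spectral_radius (burau alpha t))) \<le> GR alpha"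
      by (rule SUP_least) (simp add: R_le)
    have "GR alpha = ereal (spectral_radius (burau alpha (-1)))" using R GR by simp
    also have "\<dots> \<le> (SUP t\<in>{t::complex. cmod t = 1}. ereal (spectral_radius (burau alpha t)))"
      by (rule SUP_upper) simp
    finally show "GR alpha \<le> (SUP t\<in>{t::complex. cmod t = 1}. ereal (spectral_radius (burau alpha t)))" .
  qed
  show ?thesis using alpha_1 alpha_2 alpha_3 alpha_4 alpha_5 cp_B root GR R SUP by simp
qed

end
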